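(* Let $\theta>2$, let $G=(\mu,\mathcal{V},\mathcal{W},\mathcal{E})$ be a $\theta$-maximal, non-trivial weighted bipartite graph, and let $w_0\in\mathcal{W}$. There exists a subgraph $G'=(\mu,\mathcal{V}',\mathcal{W}',\mathcal{E}')$ of $G$ such that: (a) $(v,w_0)\in \mathcal{E}'$ for all $v\in\mathcal{V}'$; (b) for all $w\in\mathcal{W}'$, there exists $v\in\mathcal{V}'$ such that $(v,w)\in\mathcal{E}'$; (c) $\mu^{(\theta)}(G)\le (1-1/\theta)^{-\theta} \mu^{(\theta-1)}(G')$.
   Context: A weighted bipartite graph is $G=(\mu,\mathcal{V},\mathcal{W},\mathcal{E})$ with $\mu:\mathbb{R}_{>0}\to\mathbb{R}_{>0}$, $\mathcal{V},\mathcal{W}$ finite sets of positive reals, $\mathcal{E}\subseteq\mathcal{V}\times\mathcal{W}$; it is non-trivial if $\mathcal{E}\ne\emptyset$. $\mu(\mathcal{T})=\sum_{t\in\mathcal{T}}\mu(t)$ and $\mu(\mathcal{E})=\sum_{(v,w)\in\mathcal{E}}\mu(v)\mu(w)$. Edge density $\delta(G)=\mu(\mathcal{E})/(\mu(\mathcal{V})\mu(\mathcal{W}))$ if $\mathcal{E}\ne\emptyset$, else $0$. For $\theta\ge1$, $\mu^{(\theta)}(G)=\delta(G)^\theta\mu(\mathcal{V})\mu(\mathcal{W})$. A subgraph of $G$ is $(\mu,\mathcal{V}',\mathcal{W}',\mathcal{E}')$ with $\mathcal{V}'\subseteq\mathcal{V}$, $\mathcal{W}'\subseteq\mathcal{W}$,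 $\mathcal{E}'\subseteq\mathcal{E}\cap(\mathcal{V}'\times\mathcal{W}')$. $G$ is $\theta$-maximal if $\mu^{(\theta)}(G)\ge\mu^{(\theta)}(G')$ for every subgraph $G'$. *)

theory Defs
  imports Complex_Main
begin

definition wbg :: "(real \<Rightarrow> real) \<Rightarrow> real set \<Rightarrow> real set \<Rightarrow> (real \<times> real) set \<Rightarrow> bool" where
  "wbg mu V W E \<longleftrightarrow> (\<forall>x>0. mu x > 0) \<and> finite V \<and> finite W \<and>
     (\<forall>v\<in>V. v > 0) \<and> (\<forall>w\<in>W. w > 0) \<and> E \<subseteq> V \<times> W"

definition wmeas :: "(real \<Rightarrow> real) \<Rightarrow> real set \<Rightarrow> real" where
  "wmeas mu T = (\<Sum>t\<in>T. mu t)"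

definition emeas :: "(real \<Rightarrow> real) \<Rightarrow> (real \<times> real) set \<Rightarrow> real" where
  "emeas mu E = (\<Sum>(v,w)\<in>E. mu v * mu w)"

definition density :: "(real \<Rightarrow> real) \<Rightarrow> real set \<Rightarrow> real set \<Rightarrow> (real \<times> real) set \<Rightarrow> real" where
  "density mu V W E = (if E = {} then 0 else emeas mu E / (wmeas mu V * wmeas mu W))"

definition mu_theta :: "real \<Rightarrow> (real \<Rightarrow> real) \<Rightarrow> real set \<Rightarrow> real set \<Rightarrow> (real \<times> real) set \<Rightarrow> real" where
  "mu_theta \<theta> mu V W E = density mu V W E powr \<theta> * wmeas mu V * wmeas mu W"

definition is_subgraph :: "real set \<Rightarrow> real set \<Rightarrow> (real \<times> real) set \<Rightarrow>
    real set \<Rightarrow> real set \<Rightarrow> (real \<times> real) set \<Rightarrow> bool" where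
  "is_subgraph V' W' E' V W E \<longleftrightarrow> V' \<subseteq> V \<and> W' \<subseteq> W \<and> E' \<subseteq> E \<inter> (V' \<times> W')"

definition theta_maximal :: "real \<Rightarrow> (real \<Rightarrow> real) \<Rightarrow> real set \<Rightarrow> real set \<Rightarrow> (real \<times> real) set \<Rightarrow> bool" where
  "theta_maximal \<theta> mu V W E \<longleftrightarrow>
     (\<forall>V' W' E'. is_subgraph V' W' E' V W E \<longrightarrow> mu_theta \<theta> mu V W E \<ge> mu_theta \<theta> mu V' W' E')"

end

theory Submission
  imports Defs "HOL-Analysis.Convex"
begin

lemma conc: fixes z p :: real assumes "0 \<le> z" "0 \<le> p" "p \<le> 1"
  shows "z powr p \<le> 1 - p * (1 - z)"
proof (cases "z = 0")
  case True thus ?thesis using assms by auto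
next
  case False
  have "z powr p * 1 powr (1-p) \<le> p*z + (1-p)*1"
    by (rule Youngs_inequality_0) (use assms False in auto)
  thus ?thesis by (simp add: algebra_simps)
qed

lemma rootstep: fixes u z \<theta> :: real assumes "0 \<le> u" "0 \<le> z" "\<theta> > 1"
  and "u powr \<theta> \<le> z powr (\<theta>-1)"
  shows "u \<le> 1 - (1-1/\<theta>) * (1 - z)"
proof -
  have "u = (u powr \<theta>) powr (1/\<theta>)" using assms by (simp add: powr_powr)
  also have "\<dots> \<le> (z powr (\<theta>-1)) powr (1/\<theta>)"
    by (rule powr_mono2) (use assms in auto)
  also have "\<dots> = z powr (1-1/\<theta>)" using assms by (simp add: powr_powr field_simps)
  also have "\<dots> \<le> 1 - (1-1/\<theta>) * (1 - z)" by (rule conc) (use assms in auto)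
  finally show ?thesis .
qed

lemma core_step:
  fixes \<theta> a b e e1 b1 :: real
  assumes "\<theta>>1" "a>0" "b>0" "e>0" "0\<le>e1" "0\<le>b1" "b1\<le>b" "e1 \<le> a*b1"
   and H: "(e1/(a*b1)) powr \<theta> * a * b1 \<le> (e/(a*b)) powr \<theta> * a * b"
  shows "e1/e \<le> 1 - (1-1/\<theta>)*(1 - b1/b)"
proof (cases "b1 = 0")
  case True
  then have "e1 = 0" using assms by auto
  then show ?thesis using True assms by (simp add: field_simps)
next
  case False
  then have b1: "b1 > 0" using assms by auto
  have "(e1/e) powr \<theta> \<le> (b1/b) powr (\<theta>-1)"
  proof -
    have eq1: "(e1/(a*b1)) powr \<theta> * a * b1 = (e1/e) powr \<theta> * (e/(a*b)) powr \<theta> * (b/b1) powr \<theta> * a * b1"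
    proof -
      have "e1/(a*b1) = (e1/e) * (e/(a*b)) * (b/b1)" using assms b1 by (simp add: field_simps)
      hence "(e1/(a*b1)) powr \<theta> = (e1/e) powr \<theta> * (e/(a*b)) powr \<theta> * (b/b1) powr \<theta>"
        using assms b1 by (simp only: powr_mult)
      thus ?thesis by simp
    qed
    have D: "(e/(a*b)) powr \<theta> > 0" using assms by simp
    have "(e1/e) powr \<theta> * (b/b1) powr \<theta> * b1 \<le> b"
    proof -
      have "(e/(a*b)) powr \<theta> * a * ((e1/e) powr \<theta> * (b/b1) powr \<theta> * b1) \<le> (e/(a*b)) powr \<theta> * a * b"
        using H[unfolded eq1] by (simp add: mult_ac)
      thus ?thesis using D assms by (simp add: mult_le_cancel_left_pos)
    qed
    hence "(e1/e) powr \<theta> \<le> b / ((b/b1) powr \<theta> * b1)" using b1 assms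
      by (simp add: pos_le_divide_eq mult_ac)
    also have "b / ((b/b1) powr \<theta> * b1) = (b1/b) powr (\<theta>-1)"
      using b1 assms by (simp add: powr_diff powr_divide field_simps)
    finally show ?thesis .
  qed
  from rootstep[OF _ _ _ this] show ?thesis using assms b1 by simp
qed

lemma final_ineq:
  fixes \<theta> p a b e a' b' e' :: real
  assumes "\<theta> > 2" "p = 1 - 1/\<theta>" "a>0" "b>0" "e>0" "a'>0" "b'>0" "b'\<le>b" "e'>0"
    and X: "p*(a'/a) \<le> e'/e" and Y: "p*e/b \<le> a'"
  shows "(e/(a*b)) powr \<theta> * a * b \<le> p powr (-\<theta>) * (e'/(a'*b')) powr (\<theta>-1) * a' * b'"
proof -
  have "1/\<theta> < 1" using assms by simp
  hence p: "p > 0" using assms by linarith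
  have eqR: "p powr (-\<theta>) * (e'/(a'*b')) powr (\<theta>-1) * a' * b' = p powr (-\<theta>) * ((e'/a') powr (\<theta>-1) * a' * b' powr (2-\<theta>))"
  proof -
    have f1: "(e'/(a'*b')) powr (\<theta>-1) = (e'/a') powr (\<theta>-1) / b' powr (\<theta>-1)"
      using assms by (simp add: powr_divide powr_mult)
    have f2: "b' / b' powr (\<theta>-1) = b' powr (2-\<theta>)"
      using assms by (simp add: powr_diff power2_eq_square)
    show ?thesis unfolding f1 f2[symmetric] by (simp add: field_simps)
  qed
  have m1: "b powr (2-\<theta>) \<le> b' powr (2-\<theta>)" by (rule powr_mono2') (use assms in auto)
  have m2: "(p*e/a) powr (\<theta>-1) \<le> (e'/a') powr (\<theta>-1)"
  proof (rule powr_mono2)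
    show "p*e/a \<le> e'/a'" using X assms p by (simp add: field_simps)
  qed (use assms p in auto)
  have "(p*e/a) powr (\<theta>-1) * (p*e/b) * b powr (2-\<theta>) \<le> (e'/a') powr (\<theta>-1) * a' * b' powr (2-\<theta>)"
    by (intro mult_mono m1 m2 Y) (use assms p in auto)
  hence "p powr (-\<theta>) * ((p*e/a) powr (\<theta>-1) * (p*e/b) * b powr (2-\<theta>)) \<le> p powr (-\<theta>) * ((e'/a') powr (\<theta>-1) * a' * b' powr (2-\<theta>))"
    by (rule mult_left_mono) simp
  moreover have "p powr (-\<theta>) * ((p*e/a) powr (\<theta>-1) * (p*e/b) * b powr (2-\<theta>)) = (e/(a*b)) powr \<theta> * a * b"
  proof -
    have 1: "(p*e/a) powr (\<theta>-1) = p powr (\<theta>-1) * (e/a) powr (\<theta>-1)"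
      using assms p by (simp add: powr_mult powr_divide)
    have 2: "(e/(a*b)) powr \<theta> = (e/a) powr \<theta> / b powr \<theta>"
      using assms by (simp add: powr_divide powr_mult)
    have 3: "(e/a) powr \<theta> = (e/a) powr (\<theta>-1) * (e/a)"
      using assms by (simp add: powr_diff power2_eq_square)
    have 4: "b powr (2-\<theta>) = b * b / b powr \<theta>"
      using assms by (simp add: powr_diff power2_eq_square)
    have 5: "p powr (-\<theta>) * p powr (\<theta>-1) * p = 1"
      using p by (simp add: powr_minus powr_diff field_simps)
    have "p powr (-\<theta>) * ((p*e/a) powr (\<theta>-1) * (p*e/b) * b powr (2-\<theta>))
       = (p powr (-\<theta>) * p powr (\<theta>-1) * p) * ((e/a) powr (\<theta>-1) * e * b / b powr \<theta>)"
      unfolding 1 4 using assms by (simp add: field_simps)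
    also have "\<dots> = (e/(a*b)) powr \<theta> * a * b"
      unfolding 5 2 3 using assms by (simp add: field_simps)
    finally show ?thesis .
  qed
  ultimately show ?thesis unfolding eqR by linarith
qed

lemma mt_formula: "mu_theta \<theta> mu V W E = (emeas mu E / (wmeas mu V * wmeas mu W)) powr \<theta> * wmeas mu V * wmeas mu W"
  unfolding mu_theta_def density_def by (cases "E = {}") (auto simp: emeas_def)

lemma emeas_bound:
  assumes "E1 \<subseteq> V1 \<times> W1" "finite V1" "finite W1" "\<forall>v\<in>V1. mu v \<ge> 0" "\<forall>w\<in>W1. mu w \<ge> 0"
  shows "emeas mu E1 \<le> wmeas mu V1 * wmeas mu W1"
proof -
  have "emeas mu E1 \<le> (\<Sum>(v,w)\<in>V1\<times>W1. mu v * mu w)"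
    unfolding emeas_def by (rule sum_mono2) (use assms in auto)
  also have "\<dots> = (\<Sum>v\<in>V1. \<Sum>w\<in>W1. mu v * mu w)" by (simp add: sum.cartesian_product)
  also have "\<dots> = wmeas mu V1 * wmeas mu W1" unfolding wmeas_def by (simp add: sum_product)
  finally show ?thesis .
qed

theorem lemma5p10:
  fixes \<theta> :: real and mu :: "real \<Rightarrow> real" and V W :: "real set"
    and E :: "(real \<times> real) set" and w0 :: real
  assumes "\<theta> > 2"
    and "wbg mu V W E"
    and "E \<noteq> {}"
    and "theta_maximal \<theta> mu V W E"
    and "w0 \<in> W"
  shows "\<exists>V' W' E'. is_subgraph V' W' E' V W E
           \<and> (\<forall>v\<in>V'. (v, w0) \<in> E')
           \<and> (\<forall>w\<in>W'. \<exists>v\<in>V'. (v, w) \<in> E')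
           \<and> mu_theta \<theta> mu V W E \<le> (1 - 1/\<theta>) powr (-\<theta>) * mu_theta (\<theta> - 1) mu V' W' E'"
proof -
  note th = assms(1) and w0 = assms(5) and Ene = assms(3)
  from assms(2) have mupos: "\<And>x. x > 0 \<Longrightarrow> mu x > 0" and fV: "finite V" and fW: "finite W"
    and Vpos: "\<And>v. v \<in> V \<Longrightarrow> v > 0" and Wpos: "\<And>w. w \<in> W \<Longrightarrow> w > 0" and EVW: "E \<subseteq> V \<times> W"
    unfolding wbg_def by auto
  have maxi: "\<And>V1 W1 E1. is_subgraph V1 W1 E1 V W E \<Longrightarrow> mu_theta \<theta> mu V1 W1 E1 \<le> mu_theta \<theta> mu V W E"
    using assms(4) unfolding theta_maximal_def by blast
  have muV: "\<And>v. v \<in> V \<Longrightarrow> mu v > 0" using mupos Vpos by blast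
  have muW: "\<And>w. w \<in> W \<Longrightarrow> mu w > 0" using mupos Wpos by blast
  have fE: "finite E" using EVW fV fW by (meson finite_SigmaI finite_subset)
  define p where "p = 1 - 1/\<theta>"
  have "1/\<theta> < 1" using th by simp
  hence p: "p > 0" unfolding p_def by linarith
  define V' where "V' = {v\<in>V. (v,w0)\<in>E}"
  define W' where "W' = {w\<in>W. \<exists>v\<in>V'. (v,w)\<in>E}"
  define E' where "E' = E \<inter> (V' \<times> W')"
  define a where "a = wmeas mu V"
  define b where "b = wmeas mu W"
  define e where "e = emeas mu E"
  define a' where "a' = wmeas mu V'"
  define b' where "b' = wmeas mu W'"
  define e' where "e' = emeas mu E'"
  define m where "m = mu w0"
  have m: "m > 0" unfolding m_def using muW w0 by blast
  have E'alt: "E' = {x\<in>E. fst x \<in> V'}" unfolding E'_def W'_def using EVW by fastforce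
  obtain v0 w1 where vw: "(v0,w1) \<in> E" using Ene by auto
  have "V \<noteq> {}" using vw EVW by auto
  have a: "a > 0" unfolding a_def wmeas_def using muV fV vw EVW
    by (intro sum_pos) auto
  have b: "b > 0" unfolding b_def wmeas_def using muW fW w0 by (intro sum_pos) auto
  have e: "e > 0" unfolding e_def emeas_def using fE Ene
  proof (intro sum_pos)
    fix x assume "x \<in> E" then show "0 < (case x of (v, w) \<Rightarrow> mu v * mu w)"
      using EVW muV muW by (auto split: prod.splits)
  qed auto
  have V'V: "V' \<subseteq> V" and W'W: "W' \<subseteq> W" unfolding V'_def W'_def by auto
  have fV': "finite V'" using V'V fV finite_subset by blast
  have fW': "finite W'" using W'W fW finite_subset by blast
  define E1 where "E1 = {x\<in>E. snd x \<noteq> w0}"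
  have splitE: "e = emeas mu E1 + m * a'"
  proof -
    have "E = E1 \<union> (\<lambda>v. (v,w0)) ` V'" unfolding E1_def V'_def using EVW by auto
    moreover have "E1 \<inter> (\<lambda>v. (v,w0)) ` V' = {}" unfolding E1_def by auto
    ultimately have "emeas mu E = emeas mu E1 + emeas mu ((\<lambda>v. (v,w0)) ` V')"
      unfolding emeas_def using fE fV' by (metis (no_types, lifting) finite_Un sum.union_disjoint)
    moreover have "emeas mu ((\<lambda>v. (v,w0)) ` V') = m * a'"
      unfolding emeas_def a'_def wmeas_def m_def
      by (subst sum.reindex) (auto simp: inj_on_def sum_distrib_left mult.commute)
    ultimately show ?thesis unfolding e_def by simp
  qed
  have bm: "wmeas mu (W - {w0}) = b - m"
    unfolding wmeas_def b_def m_def using fW w0 by (simp add: sum_diff1)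
  have E1sub: "E1 \<subseteq> V \<times> (W - {w0})" unfolding E1_def using EVW by auto
  have e1b: "emeas mu E1 \<le> a * (b - m)"
    using emeas_bound[OF E1sub fV] fW muV muW bm unfolding a_def
    by (metis DiffD1 finite_Diff less_imp_le)
  have "mu_theta \<theta> mu V (W - {w0}) E1 \<le> mu_theta \<theta> mu V W E"
    by (rule maxi) (use E1sub in \<open>auto simp: is_subgraph_def E1_def\<close>)
  hence H1: "(emeas mu E1 / (a * (b - m))) powr \<theta> * a * (b - m) \<le> (e/(a*b)) powr \<theta> * a * b"
    unfolding mt_formula bm a_def b_def e_def .
  have e1nn: "0 \<le> emeas mu E1" unfolding emeas_def
    by (rule sum_nonneg) (use E1sub muV muW in \<open>auto simp: less_imp_le\<close>)
  have mb: "m \<le> b" unfolding m_def b_def wmeas_def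
    by (rule member_le_sum) (use w0 fW muW in \<open>auto simp: less_imp_le\<close>)
  have r1: "emeas mu E1 / e \<le> 1 - p * (1 - (b-m)/b)"
    using core_step[OF _ a b e e1nn _ _ e1b H1] th mb m unfolding p_def by simp
  have Y: "p*e/b \<le> a'"
  proof -
    have "(e - m*a')/e \<le> 1 - p * (m/b)" using r1 splitE b by (simp add: field_simps)
    hence "p * (m/b) \<le> m*a'/e" using e by (simp add: field_simps)
    hence "p * m * e \<le> m * a' * b" using e b by (simp add: field_simps)
    hence "m * (p * e) \<le> m * (a' * b)" by (simp add: mult_ac)
    hence "p*e \<le> a' * b" using m by simp
    thus ?thesis using b by (simp add: field_simps)
  qed
  have "p*e/b > 0" using p e b by simp
  hence a'pos: "a' > 0" using Y by linarith
  define E2 where "E2 = {x\<in>E. fst x \<notin> V'}"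
  have splitE2: "e = emeas mu E2 + e'"
  proof -
    have "E = E2 \<union> E'" unfolding E2_def E'alt by auto
    moreover have "E2 \<inter> E' = {}" unfolding E2_def E'alt by auto
    ultimately show ?thesis unfolding e_def e'_def emeas_def using fE
      by (metis (no_types, lifting) finite_Un sum.union_disjoint add.commute)
  qed
  have am: "wmeas mu (V - V') = a - a'"
    unfolding wmeas_def a_def a'_def using fV V'V by (simp add: sum_diff)
  have E2sub: "E2 \<subseteq> (V - V') \<times> W" unfolding E2_def using EVW by auto
  have e2b: "emeas mu E2 \<le> (a - a') * b"
    using emeas_bound[OF E2sub _ fW] fV muV muW am unfolding b_def
    by (metis DiffD1 finite_Diff less_imp_le)
  have "mu_theta \<theta> mu (V - V') W E2 \<le> mu_theta \<theta> mu V W E"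
    by (rule maxi) (use E2sub in \<open>auto simp: is_subgraph_def E2_def\<close>)
  hence H2: "(emeas mu E2 / ((a - a') * b)) powr \<theta> * (a - a') * b \<le> (e/(a*b)) powr \<theta> * a * b"
    unfolding mt_formula am a_def b_def e_def .
  have H2': "(emeas mu E2 / (b * (a - a'))) powr \<theta> * b * (a - a') \<le> (e/(b*a)) powr \<theta> * b * a"
    using H2 by (simp add: mult_ac)
  have e2nn: "0 \<le> emeas mu E2" unfolding emeas_def
    by (rule sum_nonneg) (use E2sub muV muW in \<open>auto simp: less_imp_le\<close>)
  have aa: "a' \<le> a" unfolding a_def a'_def wmeas_def
    by (rule sum_mono2) (use fV V'V muV in \<open>auto simp: less_imp_le\<close>)
  have r2: "emeas mu E2 / e \<le> 1 - p * (1 - (a-a')/a)"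
    using core_step[OF _ b a e e2nn _ _ _ H2'] th aa a'pos e2b unfolding p_def by (simp add: mult.commute)
  have X: "p*(a'/a) \<le> e'/e"
  proof -
    have "(e - e')/e \<le> 1 - p * (a'/a)" using r2 splitE2 a by (simp add: field_simps)
    thus ?thesis using e by (simp add: field_simps)
  qed
  have "p*(a'/a) > 0" using p a'pos a by simp
  hence "e'/e > 0" using X by linarith
  hence e'pos: "e' > 0" using e by (simp add: zero_less_divide_iff)
  have "V' \<noteq> {}" using a'pos unfolding a'_def wmeas_def by auto
  then obtain v1 where v1: "v1 \<in> V'" by blast
  have w0W': "w0 \<in> W'" unfolding W'_def using w0 v1 unfolding V'_def by auto
  have b'pos: "b' > 0" unfolding b'_def wmeas_def using fW' w0W' W'W muW by (intro sum_pos) auto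
  have bb: "b' \<le> b" unfolding b_def b'_def wmeas_def
    by (rule sum_mono2) (use fW W'W muW in \<open>auto simp: less_imp_le\<close>)
  have fin: "(e/(a*b)) powr \<theta> * a * b \<le> p powr (-\<theta>) * (e'/(a'*b')) powr (\<theta>-1) * a' * b'"
    by (rule final_ineq[OF th p_def a b e a'pos b'pos bb e'pos X Y])
  show ?thesis
  proof (intro exI conjI)
    show "is_subgraph V' W' E' V W E" unfolding is_subgraph_def E'_def using V'V W'W by auto
    show "\<forall>v\<in>V'. (v, w0) \<in> E'" unfolding E'_def using w0W' by (auto simp: V'_def)
    show "\<forall>w\<in>W'. \<exists>v\<in>V'. (v, w) \<in> E'" unfolding E'_def W'_def by auto
    show "mu_theta \<theta> mu V W E \<le> (1 - 1/\<theta>) powr (-\<theta>) * mu_theta (\<theta> - 1) mu V' W' E'"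
      using fin unfolding mt_formula a_def b_def e_def a'_def b'_def e'_def p_def by (simp add: mult_ac)
  qed
qed

end
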